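(* Let $d\ge1$, $W\ge2$, $n\ge1$, $\Omega=[0,1]^d$, and let $\Phi:(B_{\ell_\infty^{\tilde n}},\|\cdot\|_{\ell_\infty^{\tilde n}})\to C(\Omega)$ be the ReLU neural network parametrization map of width $W$ and depth $n$ described in the context. Then there is a constant $C'=C'(d)$ depending only on $d$ such that $$\|\Phi(y)-\Phi(y')\|_{C(\Omega)}\le C'nW^n\|y-y'\|_{\ell_\infty^{\tilde n}}\quad\text{for all }y,y'\in B_{\ell_\infty^{\tilde n}}.$$
   Context: Let $\tilde n=W(d+1)+(n-1)W(W+1)+(W+1)$, $\|y\|_{\ell_\infty^{\tilde n}}=\max_i|y_i|$ and $B_{\ell_\infty^{\tilde n}}=\{y\in\mathbb{R}^{\tilde n}:\|y\|_{\ell_\infty^{\tilde n}}\le1\}$. A vector $y\in\mathbb{R}^{\tilde n}$ lists (in a fixed order) the entries of affine maps $A^{(0)}(x)=A_0x+b^{(0)}$ with $A_0\in\mathbb{R}^{W\times d}$, $b^{(0)}\in\mathbb{R}^W$; $A^{(\ell)}(x)=A_\ell x+b^{(\ell)}$ with $A_\ell\in\mathbb{R}^{W\times W}$, $b^{(\ell)}\in\mathbb{R}^W$ for $\ell=1,\dots,n-1$; and $A^{(n)}(x)=A_nx+b^{(n)}$ with $A_n\in\mathbb{R}^{1\times W}$, $b^{(n)}\in\mathbb{R}$. With $\bar\sigma:\mathbb{R}^W\to\mathbb{R}^W$ applying $t\mapsto\max\{t,0\}$ coordinatewise, $\Phi(y)$ is the function $\Omega\to\mathbb{R}$ given by $\Phi(y)=A^{(n)}\circ\bar\sigma\circ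 A^{(n-1)}\circ\cdots\circ\bar\sigma\circ A^{(0)}$. $C(\Omega)$ carries the sup norm. *)

theory Defs
  imports "HOL-Analysis.Analysis"
begin

text \<open>Parameter vectors y in R^ntilde are represented as functions nat => real;
only the entries with index < ntilde are used. Inputs x in [0,1]^d are functions
nat => real with 0 <= x j <= 1 for j < d.\<close>

definition relu :: "real \<Rightarrow> real" where
  "relu t = max t 0"

definition ntilde :: "nat \<Rightarrow> nat \<Rightarrow> nat \<Rightarrow> nat" where
  "ntilde d W n = W * (d + 1) + (n - 1) * W * (W + 1) + (W + 1)"

definition linf_norm :: "nat \<Rightarrow> (nat \<Rightarrow> real) \<Rightarrow> real" where
  "linf_norm N y = Max ({0} \<union> {\<bar>y i\<bar> | i. i < N})"

definition in_unit_ball :: "nat \<Rightarrow> (nat \<Rightarrow> real) \<Rightarrow> bool" where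
  "in_unit_ball N y \<longleftrightarrow> linf_norm N y \<le> 1"

definition in_cube :: "nat \<Rightarrow> (nat \<Rightarrow> real) \<Rightarrow> bool" where
  "in_cube d x \<longleftrightarrow> (\<forall>j<d. 0 \<le> x j \<and> x j \<le> 1)"

text \<open>Fixed order of parameters: layer 0 occupies indices 0 ..< W(d+1); row i of
(A_0 | b^(0)) is stored at i(d+1) .. i(d+1)+d (matrix entries then bias).
Layer l (1 <= l <= n-1) starts at offset W(d+1)+(l-1)W(W+1), row i at
offset + i(W+1) (W matrix entries then bias). The output layer starts at
W(d+1)+(n-1)W(W+1): W entries of A_n, then b^(n).
hidden d W y x l i = i-th coordinate of sigma(A^(l)(... sigma(A^(0) x)).\<close>

fun hidden :: "nat \<Rightarrow> nat \<Rightarrow> (nat \<Rightarrow> real) \<Rightarrow> (nat \<Rightarrow> real) \<Rightarrow> nat \<Rightarrow> nat \<Rightarrow> real" where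
  "hidden d W y x 0 i =
     relu ((\<Sum>j<d. y (i * (d + 1) + j) * x j) + y (i * (d + 1) + d))"
| "hidden d W y x (Suc l) i =
     relu ((\<Sum>j<W. y (W * (d + 1) + l * W * (W + 1) + i * (W + 1) + j) * hidden d W y x l j)
           + y (W * (d + 1) + l * W * (W + 1) + i * (W + 1) + W))"

definition Phi :: "nat \<Rightarrow> nat \<Rightarrow> nat \<Rightarrow> (nat \<Rightarrow> real) \<Rightarrow> (nat \<Rightarrow> real) \<Rightarrow> real" where
  "Phi d W n y x =
     (let off = W * (d + 1) + (n - 1) * W * (W + 1) in
      (\<Sum>j<W. y (off + j) * hidden d W y x (n - 1) j) + y (off + W))"

end

theory Submission
  imports Defs
begin

lemma idx_lt: "(i::nat) < W \<Longrightarrow> j \<le> k \<Longrightarrow> i * (k + 1) + j < W * (k + 1)"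
proof -
  assume a: "i < W" "j \<le> k"
  have "(i + 1) * (k + 1) \<le> W * (k + 1)" using a by (intro mult_le_mono1) simp
  moreover have "i * (k + 1) + j < (i + 1) * (k + 1)" using a by simp
  ultimately show ?thesis by linarith
qed

lemma relu_nonneg: "relu t \<ge> 0" by (simp add: relu_def)
lemma relu_le: "relu t \<le> \<bar>t\<bar>" by (simp add: relu_def)
lemma relu_lip: "\<bar>relu a - relu b\<bar> \<le> \<bar>a - b\<bar>" by (simp add: relu_def)

lemma lin_bound:
  fixes a b :: "nat \<Rightarrow> real"
  assumes "\<And>j. j < W \<Longrightarrow> \<bar>a j\<bar> \<le> 1" "\<And>j. j < W \<Longrightarrow> \<bar>b j\<bar> \<le> H" "\<bar>c\<bar> \<le> 1"
  shows "\<bar>(\<Sum>j<W. a j * b j) + c\<bar> \<le> real W * H + 1"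
proof -
  have "\<bar>\<Sum>j<W. a j * b j\<bar> \<le> (\<Sum>j<W. \<bar>a j * b j\<bar>)" by (rule sum_abs)
  also have "\<dots> \<le> (\<Sum>j<W. H)"
  proof (rule sum_mono)
    fix j assume "j \<in> {..<W}"
    hence h: "\<bar>a j\<bar> \<le> 1" "\<bar>b j\<bar> \<le> H" using assms by auto
    have "\<bar>a j\<bar> * \<bar>b j\<bar> \<le> 1 * H" by (rule mult_mono) (use h in auto)
    thus "\<bar>a j * b j\<bar> \<le> H" by (simp add: abs_mult)
  qed
  finally show ?thesis using assms(3) by simp
qed

lemma lin_diff:
  fixes a b a' b' :: "nat \<Rightarrow> real"
  assumes "\<And>j. j < W \<Longrightarrow> \<bar>a' j\<bar> \<le> 1" "\<And>j. j < W \<Longrightarrow> \<bar>b j\<bar> \<le> H"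
    "\<And>j. j < W \<Longrightarrow> \<bar>a j - a' j\<bar> \<le> e" "\<And>j. j < W \<Longrightarrow> \<bar>b j - b' j\<bar> \<le> D"
    "\<bar>c - c'\<bar> \<le> e"
  shows "\<bar>((\<Sum>j<W. a j * b j) + c) - ((\<Sum>j<W. a' j * b' j) + c')\<bar> \<le> real W * (e * H + D) + e"
proof -
  have "((\<Sum>j<W. a j * b j) + c) - ((\<Sum>j<W. a' j * b' j) + c')
      = (\<Sum>j<W. (a j - a' j) * b j + a' j * (b j - b' j)) + (c - c')"
    by (simp add: sum_subtractf[symmetric] algebra_simps sum.distrib)
  hence "\<bar>((\<Sum>j<W. a j * b j) + c) - ((\<Sum>j<W. a' j * b' j) + c')\<bar>
      \<le> \<bar>\<Sum>j<W. (a j - a' j) * b j + a' j * (b j - b' j)\<bar> + \<bar>c - c'\<bar>" by simp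
  also have "\<bar>\<Sum>j<W. (a j - a' j) * b j + a' j * (b j - b' j)\<bar>
      \<le> (\<Sum>j<W. \<bar>(a j - a' j) * b j + a' j * (b j - b' j)\<bar>)" by (rule sum_abs)
  also have "\<dots> \<le> (\<Sum>j<W. e * H + D)"
  proof (rule sum_mono)
    fix j assume "j \<in> {..<W}"
    hence h: "\<bar>a' j\<bar> \<le> 1" "\<bar>b j\<bar> \<le> H" "\<bar>a j - a' j\<bar> \<le> e" "\<bar>b j - b' j\<bar> \<le> D" using assms by auto
    have "\<bar>(a j - a' j) * b j\<bar> \<le> e * H" unfolding abs_mult
      by (rule mult_mono) (use h in auto)
    moreover have "\<bar>a' j * (b j - b' j)\<bar> \<le> 1 * D" unfolding abs_mult
      by (rule mult_mono) (use h in auto)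
    moreover have "\<bar>(a j - a' j) * b j + a' j * (b j - b' j)\<bar> \<le> \<bar>(a j - a' j) * b j\<bar> + \<bar>a' j * (b j - b' j)\<bar>"
      by (rule abs_triangle_ineq)
    ultimately show "\<bar>(a j - a' j) * b j + a' j * (b j - b' j)\<bar> \<le> e * H + D"
      by linarith
  qed
  finally show ?thesis using assms(5) by simp
qed

lemma hidden_nonneg: "hidden d W y x l i \<ge> 0"
  by (cases l) (simp_all add: relu_nonneg)

lemma hidden_bound:
  assumes W: "W \<ge> 2" and cube: "in_cube d x" and y: "\<forall>i<N. \<bar>y i\<bar> \<le> 1"
  shows "W * (d + 1) + l * W * (W + 1) \<le> N \<Longrightarrow> i < W \<Longrightarrow>
     hidden d W y x l i + 1 \<le> real (d + 2) * real W ^ l"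
proof (induction l arbitrary: i)
  case 0
  have "\<bar>(\<Sum>j<d. y (i * (d + 1) + j) * x j) + y (i * (d + 1) + d)\<bar> \<le> real d * 1 + 1"
  proof (rule lin_bound)
    fix j assume "j < d"
    show "\<bar>y (i * (d + 1) + j)\<bar> \<le> 1" using y idx_lt[of i W j d] 0 \<open>j < d\<close> by auto
    show "\<bar>x j\<bar> \<le> 1" using cube \<open>j < d\<close> by (auto simp: in_cube_def)
  next
    show "\<bar>y (i * (d + 1) + d)\<bar> \<le> 1" using y idx_lt[of i W d d] 0 by auto
  qed
  thus ?case using relu_le[of "(\<Sum>j<d. y (i * (d + 1) + j) * x j) + y (i * (d + 1) + d)"] by simp
next
  case (Suc l)
  let ?o = "W * (d + 1) + l * W * (W + 1)"
  have N: "?o + W * (W + 1) \<le> N" using Suc.prems by (simp add: algebra_simps)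
  have IH: "\<And>j. j < W \<Longrightarrow> \<bar>hidden d W y x l j\<bar> \<le> real (d + 2) * real W ^ l - 1"
  proof -
    fix j assume j: "j < W"
    have "W * (d + 1) + l * W * (W + 1) \<le> N" using N by simp
    hence "hidden d W y x l j + 1 \<le> real (d + 2) * real W ^ l" using Suc.IH j by blast
    thus "\<bar>hidden d W y x l j\<bar> \<le> real (d + 2) * real W ^ l - 1"
      using hidden_nonneg[of d W y x l j] by simp
  qed
  have ix: "\<And>j. j \<le> W \<Longrightarrow> ?o + i * (W + 1) + j < N"
    using idx_lt[of i W _ W] Suc.prems N by fastforce
  have "\<bar>(\<Sum>j<W. y (?o + i * (W + 1) + j) * hidden d W y x l j) + y (?o + i * (W + 1) + W)\<bar>
     \<le> real W * (real (d + 2) * real W ^ l - 1) + 1"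
    by (rule lin_bound) (use y ix IH in auto)
  also have "\<dots> \<le> real (d + 2) * real W ^ Suc l - 1" using W by (simp add: algebra_simps)
  finally show ?case using relu_le[of "(\<Sum>j<W. y (?o + i * (W + 1) + j) * hidden d W y x l j) + y (?o + i * (W + 1) + W)"]
    by simp
qed

lemma hidden_diff:
  assumes W: "W \<ge> 2" and cube: "in_cube d x" and y: "\<forall>i<N. \<bar>y i\<bar> \<le> 1"
    and y': "\<forall>i<N. \<bar>y' i\<bar> \<le> 1" and e: "\<forall>i<N. \<bar>y i - y' i\<bar> \<le> e"
  shows "W * (d + 1) + l * W * (W + 1) \<le> N \<Longrightarrow> i < W \<Longrightarrow>
     \<bar>hidden d W y x l i - hidden d W y' x l i\<bar> \<le> real (l + 1) * real (d + 2) * real W ^ l * e"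
proof (induction l arbitrary: i)
  case 0
  have "0 < W * (d + 1)" using W by simp
  hence "0 < N" using 0 by linarith
  hence "\<bar>y 0 - y' 0\<bar> \<le> e" using e by blast
  hence e0: "e \<ge> 0" by (meson abs_ge_zero order_trans)
  have "\<bar>((\<Sum>j<d. y (i * (d + 1) + j) * x j) + y (i * (d + 1) + d)) -
         ((\<Sum>j<d. y' (i * (d + 1) + j) * x j) + y' (i * (d + 1) + d))\<bar> \<le> real d * (e * 1 + 0) + e"
  proof (rule lin_diff)
    fix j assume "j < d"
    have ij: "i * (d + 1) + j < N" using idx_lt[of i W j d] 0 \<open>j < d\<close> by auto
    show "\<bar>y' (i * (d + 1) + j)\<bar> \<le> 1" using y' ij by auto
    show "\<bar>y (i * (d + 1) + j) - y' (i * (d + 1) + j)\<bar> \<le> e" using e ij by auto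
    show "\<bar>x j\<bar> \<le> 1" using cube \<open>j < d\<close> by (auto simp: in_cube_def)
    show "\<bar>x j - x j\<bar> \<le> 0" by simp
  next
    show "\<bar>y (i * (d + 1) + d) - y' (i * (d + 1) + d)\<bar> \<le> e" using e idx_lt[of i W d d] 0 by auto
  qed
  moreover have "\<bar>hidden d W y x 0 i - hidden d W y' x 0 i\<bar> \<le> \<bar>((\<Sum>j<d. y (i * (d + 1) + j) * x j) + y (i * (d + 1) + d)) -
         ((\<Sum>j<d. y' (i * (d + 1) + j) * x j) + y' (i * (d + 1) + d))\<bar>"
    unfolding hidden.simps by (rule relu_lip)
  ultimately have "\<bar>hidden d W y x 0 i - hidden d W y' x 0 i\<bar> \<le> real d * e + e" by simp
  thus ?case using e0 by (simp add: algebra_simps)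
next
  case (Suc l)
  let ?o = "W * (d + 1) + l * W * (W + 1)"
  have N: "?o + W * (W + 1) \<le> N" using Suc.prems by (simp add: algebra_simps)
  have N': "?o \<le> N" using N by simp
  have H: "\<And>j. j < W \<Longrightarrow> \<bar>hidden d W y x l j\<bar> \<le> real (d + 2) * real W ^ l - 1"
  proof -
    fix j assume j: "j < W"
    have "hidden d W y x l j + 1 \<le> real (d + 2) * real W ^ l" using hidden_bound[OF W cube y N'] j by blast
    thus "\<bar>hidden d W y x l j\<bar> \<le> real (d + 2) * real W ^ l - 1"
      using hidden_nonneg[of d W y x l j] by simp
  qed
  have IH: "\<And>j. j < W \<Longrightarrow> \<bar>hidden d W y x l j - hidden d W y' x l j\<bar> \<le> real (l + 1) * real (d + 2) * real W ^ l * e"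
    using Suc.IH N' by blast
  have ix: "\<And>j. j \<le> W \<Longrightarrow> ?o + i * (W + 1) + j < N"
    using idx_lt[of i W _ W] Suc.prems N by fastforce
  have "\<bar>y (?o + i * (W + 1) + 0) - y' (?o + i * (W + 1) + 0)\<bar> \<le> e" using e ix[of 0] by blast
  hence e0: "e \<ge> 0" by (meson abs_ge_zero order_trans)
  have "\<bar>((\<Sum>j<W. y (?o + i * (W + 1) + j) * hidden d W y x l j) + y (?o + i * (W + 1) + W)) -
         ((\<Sum>j<W. y' (?o + i * (W + 1) + j) * hidden d W y' x l j) + y' (?o + i * (W + 1) + W))\<bar>
     \<le> real W * (e * (real (d + 2) * real W ^ l - 1) + real (l + 1) * real (d + 2) * real W ^ l * e) + e"
    by (rule lin_diff) (use y' e ix IH H in auto)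
  also have "\<dots> \<le> real (Suc l + 1) * real (d + 2) * real W ^ Suc l * e"
  proof -
    have a: "e * 1 \<le> e * real W" using W e0 by (intro mult_left_mono) auto
    have b: "real W * (e * (real (d + 2) * real W ^ l - 1) + real (l + 1) * real (d + 2) * real W ^ l * e) + e
      = real (Suc l + 1) * real (d + 2) * real W ^ Suc l * e - (e * real W - e * 1)"
    proof -
      have r: "\<And>(w::real) e A k. w * (e * (A - 1) + k * A * e) + e = (k + 1) * (A * w) * e - (e * w - e * 1)"
        by (simp add: algebra_simps)
      have s: "real (Suc l + 1) = real (l + 1) + 1" by simp
      have t: "real (d + 2) * real W ^ Suc l = real (d + 2) * real W ^ l * real W" by simp
      show ?thesis unfolding s mult.assoc[of _ "real (d + 2)"] t[unfolded mult.assoc]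
        using r[of "real W" e "real (d + 2) * real W ^ l" "real (l + 1)"] by (simp only: mult.assoc)
    qed
    show ?thesis unfolding b using a by linarith
  qed
  moreover have "\<bar>hidden d W y x (Suc l) i - hidden d W y' x (Suc l) i\<bar> \<le> \<bar>((\<Sum>j<W. y (?o + i * (W + 1) + j) * hidden d W y x l j) + y (?o + i * (W + 1) + W)) -
         ((\<Sum>j<W. y' (?o + i * (W + 1) + j) * hidden d W y' x l j) + y' (?o + i * (W + 1) + W))\<bar>"
    unfolding hidden.simps by (rule relu_lip)
  ultimately show ?case by linarith
qed

theorem theorem7p1:
  fixes d :: nat
  assumes "d \<ge> 1"
  shows "\<exists>C'::real. \<forall>W n y y' x.
           W \<ge> 2 \<longrightarrow> n \<ge> 1 \<longrightarrow>
           in_unit_ball (ntilde d W n) y \<longrightarrow> in_unit_ball (ntilde d W n) y' \<longrightarrow>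
           in_cube d x \<longrightarrow>
           \<bar>Phi d W n y x - Phi d W n y' x\<bar>
             \<le> C' * real n * real W ^ n * linf_norm (ntilde d W n) (\<lambda>i. y i - y' i)"
proof (intro exI[of _ "2 * real (d + 2)"] allI impI)
  fix W n y y' x
  assume W: "W \<ge> (2::nat)" and n: "n \<ge> (1::nat)" and hy: "in_unit_ball (ntilde d W n) y"
    and hy': "in_unit_ball (ntilde d W n) y'" and cube: "in_cube d x"
  define N where "N = ntilde d W n"
  define e where "e = linf_norm N (\<lambda>i. y i - y' i)"
  have le_linf: "\<And>f i. i < N \<Longrightarrow> \<bar>f i\<bar> \<le> linf_norm N f"
    unfolding linf_norm_def by (rule Max_ge) auto
  have y: "\<forall>i<N. \<bar>y i\<bar> \<le> 1" using hy le_linf unfolding N_def in_unit_ball_def by (meson order_trans)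
  have y': "\<forall>i<N. \<bar>y' i\<bar> \<le> 1" using hy' le_linf unfolding N_def in_unit_ball_def by (meson order_trans)
  have ee: "\<forall>i<N. \<bar>y i - y' i\<bar> \<le> e" using le_linf[of _ "\<lambda>i. y i - y' i"] unfolding e_def by auto
  have e0: "e \<ge> 0" unfolding e_def linf_norm_def by (rule Max_ge) auto
  let ?o = "W * (d + 1) + (n - 1) * W * (W + 1)"
  have NN: "N = ?o + W + 1" unfolding N_def ntilde_def by simp
  have N': "W * (d + 1) + (n - 1) * W * (W + 1) \<le> N" using NN by simp
  have H: "\<And>j. j < W \<Longrightarrow> \<bar>hidden d W y x (n - 1) j\<bar> \<le> real (d + 2) * real W ^ (n - 1) - 1"
  proof -
    fix j assume j: "j < W"
    have "hidden d W y x (n - 1) j + 1 \<le> real (d + 2) * real W ^ (n - 1)" using hidden_bound[OF W cube y N'] j by blast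
    thus "\<bar>hidden d W y x (n - 1) j\<bar> \<le> real (d + 2) * real W ^ (n - 1) - 1"
      using hidden_nonneg[of d W y x "n - 1" j] by simp
  qed
  have D: "\<And>j. j < W \<Longrightarrow> \<bar>hidden d W y x (n - 1) j - hidden d W y' x (n - 1) j\<bar>
      \<le> real (n - 1 + 1) * real (d + 2) * real W ^ (n - 1) * e"
    using hidden_diff[OF W cube y y' ee N'] by blast
  have ix: "\<And>j. j \<le> W \<Longrightarrow> ?o + j < N" using NN by simp
  have "\<bar>Phi d W n y x - Phi d W n y' x\<bar>
     \<le> real W * (e * (real (d + 2) * real W ^ (n - 1) - 1) + real (n - 1 + 1) * real (d + 2) * real W ^ (n - 1) * e) + e"
    unfolding Phi_def Let_def
    by (rule lin_diff) (use y' ee ix D H in auto)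
  also have "\<dots> = e * (real (d + 2) * (real W * real W ^ (n - 1))) - real W * e + e
      + real n * real (d + 2) * (real W * real W ^ (n - 1)) * e"
    using n by (simp add: algebra_simps of_nat_diff)
  also have "real W * real W ^ (n - 1) = real W ^ n" using n by (simp add: power_eq_if)
  also have "e * (real (d + 2) * real W ^ n) - real W * e + e + real n * real (d + 2) * real W ^ n * e
      \<le> 2 * real (d + 2) * real n * real W ^ n * e"
  proof -
    have "e * (real (d + 2) * real W ^ n) \<le> real n * real (d + 2) * real W ^ n * e"
    proof -
      have "0 \<le> e * (real W ^ n * real (d + 2))" using e0 by simp
      hence "e * (real W ^ n * real (d + 2)) * 1 \<le> e * (real W ^ n * real (d + 2)) * real n"
        using n by (intro mult_left_mono) auto
      thus ?thesis by (simp add: mult_ac)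
    qed
    moreover have "1 * e \<le> real W * e" by (rule mult_right_mono) (use W e0 in auto)
    moreover have "2 * real (d + 2) * real n * real W ^ n * e = 2 * (real n * real (d + 2) * real W ^ n * e)"
      by (simp add: mult_ac)
    ultimately show ?thesis by linarith
  qed
  finally show "\<bar>Phi d W n y x - Phi d W n y' x\<bar>
             \<le> 2 * real (d + 2) * real n * real W ^ n * linf_norm (ntilde d W n) (\<lambda>i. y i - y' i)"
    unfolding e_def N_def .
qed

end
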